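(* Let $G$ be an $X-Y$ normalized graph and let $K \neq N(X)$ be an important $X-Y$ separator of $G$. Then $K$ is a compound witness (w.r.t. $X,Y$ in $G$) of rank at most $excess(K)$.
   Context: $G$ is a finite undirected graph, $X,Y$ disjoint subsets of $V(G)$; $N(C)=(\bigcup_{v\in C}N(v))\setminus C$. An $X-Y$ separator is a set $K \subseteq V(G) \setminus (X \cup Y)$ such that $G \setminus K$ has no path from $X$ to $Y$; minimal means inclusion-minimal. A graph $H$ is $X-Y$ normalized if $N(X)$ is the only minimum-cardinality $X-Y$ separator of $H$. In $H$, let $r_H$ be the minimum size of an $X-Y$ separator; the excess of an $X-Y$ separator $K$ is $excess(K)=|K|-r_H$. $NR(H,Y,K)$ is the set of vertices not reachable from $Y$ in $H\setminus K$; $K \geq K'$ means $NR(H,Y,K)\supseteq NR(H,Y,K')$, $K'<K$ means $K\ge K'$ and the $NR$ sets differ. A minimal $X-Y$ separator $K$ is important if there is no $X-Y$ separator $K'$ with $K<K'$ and $|K|\ge |K'|$. For $S\subseteq N(X)$ with no vertex adjacent to $Y$, the cover excess $CE(S)$ is the excess of a smallest $X-Y$ separator disjoint from $S$; a witness of $S$ is an $X-Y$ separator disjoint from $S$ with excess $CE(S)$; in a normalized graph there is a unique witness of $S$ that is an important $X-Y$ separator, denoted $K(S)$. $Pr(H,X,Y,K)$ is the graph obtained from $H\setminus (NR(H,Y,K)\setminus X)$ by making $X$ adjacent to all vertices of $K$. Compound witness: for an $X-Y$ normalized graph $H$, a sequence $(S_1,\dots,S_r)$ of pairwise disjoint non-empty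 vertex sets and an $X-Y$ separator $K$, $K$ is a compound witness of the attribute $(S_1,\dots,S_r)$ w.r.t. $X,Y$ in $H$ if: when $r=1$, $S_1\subseteq N(X)$ and $K=K(S_1)$; when $r>1$, $K(S_1)$ is defined (i.e. $S_1\subseteq N(X)$, not adjacent to $Y$), $S_2\cup\dots\cup S_r$ is disjoint from $N(X)$, and $K$ is a compound witness of $(S_2,\dots,S_r)$ w.r.t. $X,Y$ in $Pr(H,X,Y,K(S_1))$. The rank of such a compound witness is $|S_1|+\dots+|S_r|$. *)

theory Defs
  imports Main
begin

type_synonym 'a graph = "'a set \<times> ('a \<times> 'a) set"

definition verts :: "'a graph \<Rightarrow> 'a set" where "verts G = fst G"
definition edges :: "'a graph \<Rightarrow> ('a \<times> 'a) set" where "edges G = snd G"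

definition wf_graph :: "'a graph \<Rightarrow> bool" where
  "wf_graph G \<longleftrightarrow> finite (verts G) \<and> edges G \<subseteq> verts G \<times> verts G
     \<and> sym (edges G) \<and> irrefl (edges G)"

definition nbh :: "'a graph \<Rightarrow> 'a set \<Rightarrow> 'a set" where
  "nbh G C = {u \<in> verts G. \<exists>v\<in>C. (v, u) \<in> edges G} - C"

definition path_avoid :: "'a graph \<Rightarrow> 'a set \<Rightarrow> 'a \<Rightarrow> 'a \<Rightarrow> bool" where
  "path_avoid G K a b \<longleftrightarrow> a \<in> verts G - K \<and>
     (a, b) \<in> (edges G \<inter> ((verts G - K) \<times> (verts G - K)))\<^sup>*"

definition separator :: "'a graph \<Rightarrow> 'a set \<Rightarrow> 'a set \<Rightarrow> 'a set \<Rightarrow> bool" where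
  "separator G X Y K \<longleftrightarrow> K \<subseteq> verts G - (X \<union> Y) \<and>
     \<not> (\<exists>x\<in>X. \<exists>y\<in>Y. path_avoid G K x y)"

definition min_separator :: "'a graph \<Rightarrow> 'a set \<Rightarrow> 'a set \<Rightarrow> 'a set \<Rightarrow> bool" where
  "min_separator G X Y K \<longleftrightarrow> separator G X Y K \<and>
     (\<forall>K'. K' \<subset> K \<longrightarrow> \<not> separator G X Y K')"

definition sep_num :: "'a graph \<Rightarrow> 'a set \<Rightarrow> 'a set \<Rightarrow> nat" where
  "sep_num G X Y = (LEAST n. \<exists>K. separator G X Y K \<and> card K = n)"

definition excess :: "'a graph \<Rightarrow> 'a set \<Rightarrow> 'a set \<Rightarrow> 'a set \<Rightarrow> nat" where
  "excess G X Y K = card K - sep_num G X Y"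

definition normalized :: "'a graph \<Rightarrow> 'a set \<Rightarrow> 'a set \<Rightarrow> bool" where
  "normalized G X Y \<longleftrightarrow> separator G X Y (nbh G X) \<and>
     card (nbh G X) = sep_num G X Y \<and>
     (\<forall>K. separator G X Y K \<and> card K = sep_num G X Y \<longrightarrow> K = nbh G X)"

definition NR :: "'a graph \<Rightarrow> 'a set \<Rightarrow> 'a set \<Rightarrow> 'a set" where
  "NR G Y K = {v \<in> verts G - K. \<not> (\<exists>y\<in>Y. path_avoid G K y v)}"

definition sep_ge :: "'a graph \<Rightarrow> 'a set \<Rightarrow> 'a set \<Rightarrow> 'a set \<Rightarrow> bool" where
  "sep_ge G Y K K' \<longleftrightarrow> NR G Y K' \<subseteq> NR G Y K"

definition sep_less :: "'a graph \<Rightarrow> 'a set \<Rightarrow> 'a set \<Rightarrow> 'a set \<Rightarrow> bool" where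
  "sep_less G Y K' K \<longleftrightarrow> sep_ge G Y K K' \<and> NR G Y K \<noteq> NR G Y K'"

definition important :: "'a graph \<Rightarrow> 'a set \<Rightarrow> 'a set \<Rightarrow> 'a set \<Rightarrow> bool" where
  "important G X Y K \<longleftrightarrow> min_separator G X Y K \<and>
     \<not> (\<exists>K'. separator G X Y K' \<and> sep_less G Y K K' \<and> card K \<ge> card K')"

definition admissible :: "'a graph \<Rightarrow> 'a set \<Rightarrow> 'a set \<Rightarrow> 'a set \<Rightarrow> bool" where
  "admissible G X Y S \<longleftrightarrow> S \<subseteq> nbh G X \<and> (\<forall>s\<in>S. \<forall>y\<in>Y. (s, y) \<notin> edges G)"

definition cover_excess :: "'a graph \<Rightarrow> 'a set \<Rightarrow> 'a set \<Rightarrow> 'a set \<Rightarrow> nat" where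
  "cover_excess G X Y S =
     (LEAST n. \<exists>K. separator G X Y K \<and> K \<inter> S = {} \<and> excess G X Y K = n)"

definition witness :: "'a graph \<Rightarrow> 'a set \<Rightarrow> 'a set \<Rightarrow> 'a set \<Rightarrow> 'a set \<Rightarrow> bool" where
  "witness G X Y S K \<longleftrightarrow> separator G X Y K \<and> K \<inter> S = {} \<and>
     excess G X Y K = cover_excess G X Y S"

text \<open>K(S): the unique witness of S that is an important separator.\<close>
definition KW :: "'a graph \<Rightarrow> 'a set \<Rightarrow> 'a set \<Rightarrow> 'a set \<Rightarrow> 'a set" where
  "KW G X Y S = (THE K. witness G X Y S K \<and> important G X Y K)"

definition Pr :: "'a graph \<Rightarrow> 'a set \<Rightarrow> 'a set \<Rightarrow> 'a set \<Rightarrow> 'a graph" where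
  "Pr G X Y K =
     (let W = verts G - (NR G Y K - X)
      in (W, (edges G \<inter> (W \<times> W)) \<union> (X \<times> K) \<union> (K \<times> X)))"

fun cw :: "'a graph \<Rightarrow> 'a set \<Rightarrow> 'a set \<Rightarrow> 'a set list \<Rightarrow> 'a set \<Rightarrow> bool" where
  "cw G X Y [] K = False"
| "cw G X Y [S] K \<longleftrightarrow> normalized G X Y \<and> admissible G X Y S \<and> K = KW G X Y S"
| "cw G X Y (S # S' # Ss) K \<longleftrightarrow> normalized G X Y \<and> admissible G X Y S \<and>
     \<Union> (set (S' # Ss)) \<inter> nbh G X = {} \<and>
     cw (Pr G X Y (KW G X Y S)) X Y (S' # Ss) K"

definition compound_witness :: "'a graph \<Rightarrow> 'a set \<Rightarrow> 'a set \<Rightarrow> 'a set list \<Rightarrow> 'a set \<Rightarrow> bool" where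
  "compound_witness G X Y Ss K \<longleftrightarrow>
     (\<forall>i<length Ss. Ss ! i \<noteq> {}) \<and>
     (\<forall>i<length Ss. \<forall>j<length Ss. i \<noteq> j \<longrightarrow> Ss ! i \<inter> Ss ! j = {}) \<and>
     cw G X Y Ss K"

definition cw_rank :: "'a set list \<Rightarrow> nat" where
  "cw_rank Ss = sum_list (map card Ss)"

end

theory Submission
  imports Defs
begin

lemma reach_closed:
  assumes "(a,b) \<in> R\<^sup>*" "a \<in> Q"
    and "\<And>u w. (a,u) \<in> R\<^sup>* \<Longrightarrow> (u,w) \<in> R \<Longrightarrow> u \<in> Q \<Longrightarrow> w \<in> Q"
  shows "b \<in> Q"
  using assms(1)
proof (induction rule: rtrancl_induct)
  case base then show ?case using assms(2) by simp
next
  case (step u w) then show ?case using assms(3) by blast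
qed

locale gr =
  fixes G :: "'a graph" and X Y :: "'a set"
  assumes wf: "wf_graph G" and XV: "X \<subseteq> verts G" and YV: "Y \<subseteq> verts G"
    and XY: "X \<inter> Y = {}"
begin

lemma finV: "finite (verts G)" using wf by (simp add: wf_graph_def)
lemma EV: "(u,v) \<in> edges G \<Longrightarrow> u \<in> verts G \<and> v \<in> verts G"
  using wf by (auto simp: wf_graph_def)
lemma symE: "(u,v) \<in> edges G \<Longrightarrow> (v,u) \<in> edges G"
  using wf by (auto simp: wf_graph_def sym_def)

lemma pa_end: "path_avoid G K a b \<Longrightarrow> b \<in> verts G - K"
  unfolding path_avoid_def
  by (erule conjE, erule reach_closed) auto

lemma pa_sym: "path_avoid G K a b \<Longrightarrow> path_avoid G K b a"
proof -
  assume h: "path_avoid G K a b"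
  have s: "sym (edges G \<inter> ((verts G - K) \<times> (verts G - K)))"
    by (auto simp: sym_def symE)
  have "(b,a) \<in> (edges G \<inter> ((verts G - K) \<times> (verts G - K)))\<^sup>*"
    using h sym_rtrancl[OF s] unfolding path_avoid_def by (auto dest: symD)
  then show ?thesis using pa_end[OF h] unfolding path_avoid_def by simp
qed

lemma pa_refl: "a \<in> verts G - K \<Longrightarrow> path_avoid G K a a"
  by (simp add: path_avoid_def)

lemma pa_step: "path_avoid G K a b \<Longrightarrow> (b,c) \<in> edges G \<Longrightarrow> c \<notin> K \<Longrightarrow> path_avoid G K a c"
  using pa_end[of K a b] EV[of b c] unfolding path_avoid_def
  by (auto intro: rtrancl_into_rtrancl)

lemma pa_edge: "a \<in> verts G - K \<Longrightarrow> (a,c) \<in> edges G \<Longrightarrow> c \<notin> K \<Longrightarrow> path_avoid G K a c"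
  using pa_step pa_refl by blast

lemma pa_closed:
  assumes "path_avoid G K a b" "a \<in> Q"
    and "\<And>u w. path_avoid G K a u \<Longrightarrow> (u,w) \<in> edges G \<Longrightarrow> u \<notin> K \<Longrightarrow> w \<notin> K
           \<Longrightarrow> w \<in> verts G \<Longrightarrow> u \<in> Q \<Longrightarrow> w \<in> Q"
  shows "b \<in> Q"
proof -
  have a: "a \<in> verts G - K" and r: "(a, b) \<in> (edges G \<inter> ((verts G - K) \<times> (verts G - K)))\<^sup>*"
    using assms(1) unfolding path_avoid_def by auto
  show ?thesis
    using r assms(2)
  proof (rule reach_closed)
    fix u w assume "(a,u) \<in> (edges G \<inter> ((verts G - K) \<times> (verts G - K)))\<^sup>*"
      "(u, w) \<in> edges G \<inter> (verts G - K) \<times> (verts G - K)" "u \<in> Q"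
    then show "w \<in> Q" using assms(3)[of u w] a unfolding path_avoid_def by auto
  qed
qed

lemma nbh_V: "nbh G A \<subseteq> verts G" by (auto simp: nbh_def)
lemma nbh_disj: "nbh G A \<inter> A = {}" by (auto simp: nbh_def)
lemma nbh_mem: "(v,u) \<in> edges G \<Longrightarrow> v \<in> A \<Longrightarrow> u \<notin> A \<Longrightarrow> u \<in> nbh G A"
  using EV by (auto simp: nbh_def)
lemma nbh_memD: "u \<in> nbh G A \<Longrightarrow> \<exists>v\<in>A. (v,u) \<in> edges G \<and> u \<in> verts G \<and> u \<notin> A"
  by (auto simp: nbh_def)
lemma nbh_Un: "nbh G (A \<union> B) \<subseteq> nbh G A \<union> nbh G B" by (auto simp: nbh_def)
lemma nbh_Int: "nbh G (A \<inter> B) \<subseteq> nbh G A \<union> nbh G B" by (auto simp: nbh_def)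
lemma nbh_mono: "A \<subseteq> B \<Longrightarrow> nbh G A \<subseteq> B \<union> nbh G B" by (auto simp: nbh_def)

lemma submod:
  "card (nbh G (A \<union> B)) + card (nbh G (A \<inter> B)) \<le> card (nbh G A) + card (nbh G B)"
proof -
  let ?P = "nbh G (A \<union> B)" and ?Q = "nbh G (A \<inter> B)"
  have f: "finite (nbh G C)" for C using finite_subset[OF nbh_V finV] .
  have 1: "?P \<union> ?Q \<subseteq> nbh G A \<union> nbh G B" using nbh_Un nbh_Int by blast
  have 2: "?P \<inter> ?Q \<subseteq> nbh G A \<inter> nbh G B" by (auto simp: nbh_def)
  have "card ?P + card ?Q = card (?P \<union> ?Q) + card (?P \<inter> ?Q)"
    using card_Un_Int[OF f f] by simp
  also have "\<dots> \<le> card (nbh G A \<union> nbh G B) + card (nbh G A \<inter> nbh G B)"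
    using card_mono[OF _ 1] card_mono[OF _ 2] f by (meson add_mono finite_Int finite_UnI)
  also have "\<dots> = card (nbh G A) + card (nbh G B)"
    using card_Un_Int[OF f f] by simp
  finally show ?thesis .
qed

lemma sep_from_set:
  assumes "X \<subseteq> A" "A \<inter> Y = {}" "nbh G A \<inter> Y = {}"
  shows "separator G X Y (nbh G A)"
  unfolding separator_def
proof (intro conjI notI)
  show "nbh G A \<subseteq> verts G - (X \<union> Y)" using nbh_V nbh_disj assms by blast
next
  assume "\<exists>x\<in>X. \<exists>y\<in>Y. path_avoid G (nbh G A) x y"
  then obtain x y where xy: "x \<in> X" "y \<in> Y" "path_avoid G (nbh G A) x y" by blast
  have "y \<in> A" using xy(3)
  proof (rule pa_closed)
    show "x \<in> A" using xy assms by auto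
  next
    fix u w assume "(u,w) \<in> edges G" "w \<notin> nbh G A" "u \<in> A"
    then show "w \<in> A" using nbh_mem by blast
  qed
  then show False using xy assms by blast
qed

lemma sepD: "separator G X Y K \<Longrightarrow> K \<subseteq> verts G \<and> K \<inter> X = {} \<and> K \<inter> Y = {}"
  by (auto simp: separator_def)

lemma sep_fin: "separator G X Y K \<Longrightarrow> finite K"
proof -
  assume "separator G X Y K"
  then have "K \<subseteq> verts G" using sepD by blast
  then show ?thesis using finite_subset finV by blast
qed

lemma NR_X: "separator G X Y K \<Longrightarrow> X \<subseteq> NR G Y K"
proof
  fix x assume K: "separator G X Y K" and x: "x \<in> X"
  have "x \<in> verts G - K" using K x XV sepD by blast
  moreover have "\<not> path_avoid G K y x" if "y \<in> Y" for y
  proof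
    assume "path_avoid G K y x"
    then have "path_avoid G K x y" by (rule pa_sym)
    then show False using K x that unfolding separator_def by blast
  qed
  ultimately show "x \<in> NR G Y K" unfolding NR_def by blast
qed

lemma NR_Y: "separator G X Y K \<Longrightarrow> NR G Y K \<inter> Y = {}"
proof -
  assume K: "separator G X Y K"
  { fix y assume y: "y \<in> Y" "y \<in> NR G Y K"
    then have "y \<in> verts G - K" unfolding NR_def by blast
    then have "path_avoid G K y y" by (rule pa_refl)
    then have False using y unfolding NR_def by blast }
  then show ?thesis by blast
qed

lemma NR_K: "NR G Y K \<inter> K = {}" "NR G Y K \<subseteq> verts G"
  unfolding NR_def by auto

lemma nbh_NR: "nbh G (NR G Y K) \<subseteq> K"
proof
  fix u assume "u \<in> nbh G (NR G Y K)"
  then obtain v where v: "v \<in> NR G Y K" "(v,u) \<in> edges G" "u \<in> verts G" "u \<notin> NR G Y K"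
    using nbh_memD by blast
  show "u \<in> K"
  proof (rule ccontr)
    assume "u \<notin> K"
    then obtain y where "y \<in> Y" "path_avoid G K y u" using v unfolding NR_def by auto
    then have "path_avoid G K y v" using pa_step symE v unfolding NR_def by blast
    then show False using v \<open>y \<in> Y\<close> unfolding NR_def by auto
  qed
qed

lemma sep_NR: "separator G X Y K \<Longrightarrow> separator G X Y (nbh G (NR G Y K))"
proof -
  assume K: "separator G X Y K"
  have "nbh G (NR G Y K) \<inter> Y = {}" using nbh_NR sepD[OF K] by blast
  then show ?thesis using sep_from_set NR_X[OF K] NR_Y[OF K] by blast
qed

lemma NR_nbh:
  assumes "A \<inter> Y = {}" "A \<subseteq> verts G"
  shows "A \<subseteq> NR G Y (nbh G A)"
proof
  fix v assume vA: "v \<in> A"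
  have "v \<notin> nbh G A" using vA nbh_disj by blast
  moreover have "\<not> path_avoid G (nbh G A) y v" if "y \<in> Y" for y
  proof
    assume p: "path_avoid G (nbh G A) y v"
    have "v \<in> verts G - A" using p
    proof (rule pa_closed)
      show "y \<in> verts G - A" using that assms YV by auto
    next
      fix u w assume "(u,w) \<in> edges G" "u \<notin> nbh G A" "w \<in> verts G" "u \<in> verts G - A"
      then show "w \<in> verts G - A" using nbh_mem[of w u A] symE by blast
    qed
    then show False using vA by blast
  qed
  ultimately show "v \<in> NR G Y (nbh G A)" using vA assms unfolding NR_def by blast
qed

lemma min_sep_eq: "min_separator G X Y K \<Longrightarrow> K = nbh G (NR G Y K)"
proof -
  assume m: "min_separator G X Y K"
  then have K: "separator G X Y K" unfolding min_separator_def by blast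
  have s: "separator G X Y (nbh G (NR G Y K))" using sep_NR[OF K] .
  have sub: "nbh G (NR G Y K) \<subseteq> K" by (rule nbh_NR)
  show ?thesis
  proof (rule ccontr)
    assume "K \<noteq> nbh G (NR G Y K)"
    then have "nbh G (NR G Y K) \<subset> K" using sub by blast
    then show False using m s unfolding min_separator_def by blast
  qed
qed

lemma nbhX_NR: "separator G X Y K \<Longrightarrow> nbh G X - K \<subseteq> NR G Y K"
proof
  fix s assume K: "separator G X Y K" and s: "s \<in> nbh G X - K"
  then obtain x where x: "x \<in> X" "(x,s) \<in> edges G" "s \<in> verts G" using nbh_memD by blast
  have xK: "x \<notin> K" using K x sepD by blast
  have "\<not> path_avoid G K y s" if "y \<in> Y" for y
  proof
    assume "path_avoid G K y s"
    moreover have "(s,x) \<in> edges G" using x symE by blast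
    ultimately have "path_avoid G K y x" using xK by (rule pa_step)
    then have "path_avoid G K x y" by (rule pa_sym)
    then show False using K x that unfolding separator_def by blast
  qed
  moreover have "s \<in> verts G - K" using s x by blast
  ultimately show "s \<in> NR G Y K" unfolding NR_def by blast
qed

end


locale ngr = gr +
  assumes norm: "normalized G X Y"
begin

lemma sepN: "separator G X Y (nbh G X)" using norm unfolding normalized_def by blast
lemma rN: "card (nbh G X) = sep_num G X Y" using norm unfolding normalized_def by blast
lemma uniq: "separator G X Y K \<Longrightarrow> card K = sep_num G X Y \<Longrightarrow> K = nbh G X"
  using norm unfolding normalized_def by blast

lemma card_ge: "separator G X Y K \<Longrightarrow> sep_num G X Y \<le> card K"
  unfolding sep_num_def by (rule Least_le) (rule exI[of _ K], simp)

lemma noXY: "x \<in> X \<Longrightarrow> y \<in> Y \<Longrightarrow> (x,y) \<notin> edges G"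
proof
  assume "x \<in> X" "y \<in> Y" "(x,y) \<in> edges G"
  then have "y \<in> nbh G X" using nbh_mem XY by blast
  then show False using sepD[OF sepN] \<open>y \<in> Y\<close> by blast
qed

lemma adm_sep:
  assumes "admissible G X Y S"
  shows "separator G X Y (nbh G (X \<union> S)) \<and> nbh G (X \<union> S) \<inter> S = {}"
proof -
  have S: "S \<subseteq> nbh G X" and nS: "\<forall>s\<in>S. \<forall>y\<in>Y. (s,y) \<notin> edges G"
    using assms unfolding admissible_def by auto
  have 1: "(X \<union> S) \<inter> Y = {}" using S sepD[OF sepN] XY by blast
  have 2: "nbh G (X \<union> S) \<inter> Y = {}"
  proof (rule ccontr)
    assume "nbh G (X \<union> S) \<inter> Y \<noteq> {}"
    then obtain u v where "u \<in> Y" "v \<in> X \<union> S" "(v,u) \<in> edges G"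
      using nbh_memD by blast
    then show False using noXY nS by blast
  qed
  show ?thesis using sep_from_set[OF _ 1 2] nbh_disj by blast
qed

lemma CE_le:
  assumes "separator G X Y K" "K \<inter> S = {}"
  shows "cover_excess G X Y S \<le> card K - sep_num G X Y"
  unfolding cover_excess_def excess_def
  apply (rule Least_le)
  apply (rule exI[of _ K])
  using assms by simp

lemma CE_card:
  assumes "separator G X Y K" "K \<inter> S = {}"
  shows "sep_num G X Y + cover_excess G X Y S \<le> card K"
  using CE_le[OF assms] card_ge[OF assms(1)] by linarith

lemma CE_ex:
  assumes "admissible G X Y S"
  shows "\<exists>K. separator G X Y K \<and> K \<inter> S = {} \<and> card K = sep_num G X Y + cover_excess G X Y S"
proof -
  let ?P = "\<lambda>n. \<exists>K. separator G X Y K \<and> K \<inter> S = {} \<and> excess G X Y K = n"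
  have "?P (excess G X Y (nbh G (X \<union> S)))" using adm_sep[OF assms] by blast
  then have "?P (Least ?P)" by (rule LeastI)
  then obtain K where K: "separator G X Y K" "K \<inter> S = {}" "excess G X Y K = cover_excess G X Y S"
    unfolding cover_excess_def by blast
  then have "card K = sep_num G X Y + cover_excess G X Y S"
    using card_ge[OF K(1)] unfolding excess_def by linarith
  then show ?thesis using K by blast
qed

lemma adm_sub: "admissible G X Y T \<Longrightarrow> S \<subseteq> T \<Longrightarrow> admissible G X Y S"
  unfolding admissible_def by blast

lemma CE_empty: "cover_excess G X Y {} = 0"
  using CE_le[OF sepN, of "{}"] rN by simp

lemma CE_pos:
  assumes "admissible G X Y S" "S \<noteq> {}"
  shows "1 \<le> cover_excess G X Y S"
proof (rule ccontr)
  assume "\<not> 1 \<le> cover_excess G X Y S"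
  then have c0: "cover_excess G X Y S = 0" by simp
  obtain K where K: "separator G X Y K" "K \<inter> S = {}" "card K = sep_num G X Y + cover_excess G X Y S"
    using CE_ex[OF assms(1)] by blast
  then have "K = nbh G X" using uniq c0 by simp
  moreover have "S \<subseteq> nbh G X" using assms unfolding admissible_def by blast
  ultimately show False using K(2) assms(2) by blast
qed

lemma CE_mono:
  assumes "admissible G X Y T" "S \<subseteq> T"
  shows "cover_excess G X Y S \<le> cover_excess G X Y T"
proof -
  obtain K where K: "separator G X Y K" "K \<inter> T = {}" "card K = sep_num G X Y + cover_excess G X Y T"
    using CE_ex[OF assms(1)] by blast
  have "K \<inter> S = {}" using K(2) assms(2) by blast
  then show ?thesis using CE_le[OF K(1)] K(3) by simp
qed

lemma adm_NR: "separator G X Y K \<Longrightarrow> S \<subseteq> nbh G X \<Longrightarrow> S \<inter> K = {} \<Longrightarrow> S \<subseteq> NR G Y K"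
  using nbhX_NR by blast

lemma sep_Un_NR:
  assumes "separator G X Y K1" "separator G X Y K2"
  shows "separator G X Y (nbh G (NR G Y K1 \<union> NR G Y K2))"
proof (rule sep_from_set)
  show "X \<subseteq> NR G Y K1 \<union> NR G Y K2" using NR_X[OF assms(1)] by blast
  show "(NR G Y K1 \<union> NR G Y K2) \<inter> Y = {}" using NR_Y[OF assms(1)] NR_Y[OF assms(2)] by blast
  have "nbh G (NR G Y K1 \<union> NR G Y K2) \<subseteq> K1 \<union> K2" using nbh_Un nbh_NR by blast
  then show "nbh G (NR G Y K1 \<union> NR G Y K2) \<inter> Y = {}" using sepD[OF assms(1)] sepD[OF assms(2)] by blast
qed

lemma sep_Int_NR:
  assumes "separator G X Y K1" "separator G X Y K2"
  shows "separator G X Y (nbh G (NR G Y K1 \<inter> NR G Y K2))"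
proof (rule sep_from_set)
  show "X \<subseteq> NR G Y K1 \<inter> NR G Y K2" using NR_X[OF assms(1)] NR_X[OF assms(2)] by blast
  show "(NR G Y K1 \<inter> NR G Y K2) \<inter> Y = {}" using NR_Y[OF assms(1)] by blast
  have "nbh G (NR G Y K1 \<inter> NR G Y K2) \<subseteq> K1 \<union> K2" using nbh_Int nbh_NR by blast
  then show "nbh G (NR G Y K1 \<inter> NR G Y K2) \<inter> Y = {}" using sepD[OF assms(1)] sepD[OF assms(2)] by blast
qed

lemma card_nbh_NR: "separator G X Y K \<Longrightarrow> card (nbh G (NR G Y K)) \<le> card K"
  using card_mono[OF sep_fin nbh_NR] by blast

lemma CE_submod:
  assumes "admissible G X Y S" "admissible G X Y T"
  shows "cover_excess G X Y (S \<union> T) + cover_excess G X Y (S \<inter> T)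
         \<le> cover_excess G X Y S + cover_excess G X Y T"
proof -
  obtain K1 where K1: "separator G X Y K1" "K1 \<inter> S = {}" "card K1 = sep_num G X Y + cover_excess G X Y S"
    using CE_ex[OF assms(1)] by blast
  obtain K2 where K2: "separator G X Y K2" "K2 \<inter> T = {}" "card K2 = sep_num G X Y + cover_excess G X Y T"
    using CE_ex[OF assms(2)] by blast
  have SZ: "S \<subseteq> NR G Y K1" using adm_NR[OF K1(1)] K1(2) assms(1) unfolding admissible_def by blast
  have TZ: "T \<subseteq> NR G Y K2" using adm_NR[OF K2(1)] K2(2) assms(2) unfolding admissible_def by blast
  let ?A = "NR G Y K1 \<union> NR G Y K2" and ?B = "NR G Y K1 \<inter> NR G Y K2"
  have sA: "separator G X Y (nbh G ?A)" by (rule sep_Un_NR[OF K1(1) K2(1)])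
  have sB: "separator G X Y (nbh G ?B)" by (rule sep_Int_NR[OF K1(1) K2(1)])
  have dA: "nbh G ?A \<inter> (S \<union> T) = {}" using nbh_disj[of ?A] SZ TZ by blast
  have dB: "nbh G ?B \<inter> (S \<inter> T) = {}" using nbh_disj[of ?B] SZ TZ by blast
  have 1: "sep_num G X Y + cover_excess G X Y (S \<union> T) \<le> card (nbh G ?A)" by (rule CE_card[OF sA dA])
  have 2: "sep_num G X Y + cover_excess G X Y (S \<inter> T) \<le> card (nbh G ?B)" by (rule CE_card[OF sB dB])
  have 3: "card (nbh G ?A) + card (nbh G ?B) \<le> card (nbh G (NR G Y K1)) + card (nbh G (NR G Y K2))"
    by (rule submod)
  have 4: "card (nbh G (NR G Y K1)) \<le> card K1" by (rule card_nbh_NR[OF K1(1)])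
  have 5: "card (nbh G (NR G Y K2)) \<le> card K2" by (rule card_nbh_NR[OF K2(1)])
  show ?thesis using 1 2 3 4 5 K1(3) K2(3) by linarith
qed

lemma union_lemma:
  assumes imp: "important G X Y K"
    and K1: "separator G X Y K1" "K1 \<inter> S = {}" "S \<subseteq> nbh G X"
    and mn: "\<And>K'. separator G X Y K' \<Longrightarrow> K' \<inter> S = {} \<Longrightarrow> card K1 \<le> card K'"
    and SK: "S \<subseteq> NR G Y K"
  shows "NR G Y K1 \<subseteq> NR G Y K"
proof -
  have K: "separator G X Y K" using imp unfolding important_def min_separator_def by blast
  have SZ1: "S \<subseteq> NR G Y K1" using adm_NR[OF K1(1) K1(3)] K1(2) by blast
  let ?A = "NR G Y K \<union> NR G Y K1" and ?B = "NR G Y K \<inter> NR G Y K1"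
  have sA: "separator G X Y (nbh G ?A)" by (rule sep_Un_NR[OF K K1(1)])
  have sB: "separator G X Y (nbh G ?B)" by (rule sep_Int_NR[OF K K1(1)])
  have dB: "nbh G ?B \<inter> S = {}" using nbh_disj[of ?B] SZ1 SK by blast
  have 1: "card K1 \<le> card (nbh G ?B)" using mn[OF sB dB] .
  have 3: "card (nbh G ?A) + card (nbh G ?B) \<le> card (nbh G (NR G Y K)) + card (nbh G (NR G Y K1))"
    by (rule submod)
  have 4: "card (nbh G (NR G Y K)) \<le> card K" by (rule card_nbh_NR[OF K])
  have 5: "card (nbh G (NR G Y K1)) \<le> card K1" by (rule card_nbh_NR[OF K1(1)])
  have cA: "card (nbh G ?A) \<le> card K" using 1 3 4 5 by linarith
  have AV: "?A \<subseteq> verts G" using NR_K by blast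
  have AY: "?A \<inter> Y = {}" using NR_Y[OF K] NR_Y[OF K1(1)] by blast
  have NRA: "?A \<subseteq> NR G Y (nbh G ?A)" by (rule NR_nbh[OF AY AV])
  have "NR G Y (nbh G ?A) = NR G Y K"
  proof (rule ccontr)
    assume ne: "NR G Y (nbh G ?A) \<noteq> NR G Y K"
    have "sep_less G Y K (nbh G ?A)"
      unfolding sep_less_def sep_ge_def using NRA ne by blast
    then show False using imp sA cA unfolding important_def by blast
  qed
  then show ?thesis using NRA by blast
qed

lemma KW_spec:
  assumes adm: "admissible G X Y S"
  shows "witness G X Y S (KW G X Y S) \<and> important G X Y (KW G X Y S)"
    and "\<And>K'. witness G X Y S K' \<Longrightarrow> important G X Y K' \<Longrightarrow> K' = KW G X Y S"
proof -
  let ?c = "sep_num G X Y + cover_excess G X Y S"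
  have wit_iff: "witness G X Y S K \<longleftrightarrow> separator G X Y K \<and> K \<inter> S = {} \<and> card K = ?c" for K
  proof
    assume "witness G X Y S K" then show "separator G X Y K \<and> K \<inter> S = {} \<and> card K = ?c"
      using card_ge unfolding witness_def excess_def by force
  next
    assume "separator G X Y K \<and> K \<inter> S = {} \<and> card K = ?c"
    then show "witness G X Y S K" unfolding witness_def excess_def by simp
  qed
  have SN: "S \<subseteq> nbh G X" using adm unfolding admissible_def by blast
  define WS where "WS = {K. separator G X Y K \<and> K \<inter> S = {} \<and> card K = ?c}"
  have WSne: "WS \<noteq> {}" using CE_ex[OF adm] unfolding WS_def by blast
  have WSfin: "finite WS"
  proof (rule finite_subset)
    show "WS \<subseteq> Pow (verts G)" unfolding WS_def using sepD by blast
  qed (simp add: finV)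
  define m where "m = Max ((\<lambda>K. card (NR G Y K)) ` WS)"
  have "m \<in> (\<lambda>K. card (NR G Y K)) ` WS" unfolding m_def using WSne WSfin by (intro Max_in) auto
  then obtain K0 where K0: "K0 \<in> WS" "card (NR G Y K0) = m" by auto
  have mx: "K \<in> WS \<Longrightarrow> card (NR G Y K) \<le> m" for K
    unfolding m_def using WSfin by (intro Max_ge) auto
  have K0s: "separator G X Y K0" "K0 \<inter> S = {}" "card K0 = ?c" using K0 unfolding WS_def by auto
  have imp0: "important G X Y K0"
    unfolding important_def
  proof (intro conjI notI)
    show "min_separator G X Y K0"
      unfolding min_separator_def
    proof (intro conjI allI impI notI)
      show "separator G X Y K0" by (rule K0s(1))
    next
      fix K' assume "K' \<subset> K0" "separator G X Y K'"
      then have "card K' < card K0" using psubset_card_mono sep_fin[OF K0s(1)] by blast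
      moreover have "?c \<le> card K'" using CE_card \<open>separator G X Y K'\<close> \<open>K' \<subset> K0\<close> K0s(2) by blast
      ultimately show False using K0s(3) by linarith
    qed
  next
    assume "\<exists>K'. separator G X Y K' \<and> sep_less G Y K0 K' \<and> card K' \<le> card K0"
    then obtain K' where K': "separator G X Y K'" "NR G Y K0 \<subseteq> NR G Y K'" "NR G Y K' \<noteq> NR G Y K0"
      "card K' \<le> card K0" unfolding sep_less_def sep_ge_def by blast
    have "S \<subseteq> NR G Y K0" using adm_NR[OF K0s(1) SN] K0s(2) by blast
    then have "K' \<inter> S = {}" using K'(2) NR_K(1)[of K'] by blast
    then have "?c \<le> card K'" using CE_card K'(1) by blast
    then have "K' \<in> WS" unfolding WS_def using K' K0s \<open>K' \<inter> S = {}\<close> by simp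
    then have "card (NR G Y K') \<le> card (NR G Y K0)" using mx K0 by simp
    moreover have "card (NR G Y K0) < card (NR G Y K')"
      using K'(2,3) finite_subset[OF NR_K(2) finV] psubset_card_mono by blast
    ultimately show False by linarith
  qed
  have un: "K' = K0" if "witness G X Y S K'" "important G X Y K'" for K'
  proof -
    have K's: "separator G X Y K'" "K' \<inter> S = {}" "card K' = ?c" using that(1) wit_iff by auto
    have a: "NR G Y K0 \<subseteq> NR G Y K'"
    proof (rule union_lemma[OF that(2) K0s(1) K0s(2) SN])
      show "card K0 \<le> card K''" if "separator G X Y K''" "K'' \<inter> S = {}" for K''
        using CE_card[OF that] K0s(3) by simp
      show "S \<subseteq> NR G Y K'" using adm_NR[OF K's(1) SN] K's(2) by blast
    qed
    have b: "NR G Y K' \<subseteq> NR G Y K0"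
    proof (rule union_lemma[OF imp0 K's(1) K's(2) SN])
      show "card K' \<le> card K''" if "separator G X Y K''" "K'' \<inter> S = {}" for K''
        using CE_card[OF that] K's(3) by simp
      show "S \<subseteq> NR G Y K0" using adm_NR[OF K0s(1) SN] K0s(2) by blast
    qed
    have "K' = nbh G (NR G Y K')" using min_sep_eq that(2) unfolding important_def by blast
    also have "\<dots> = nbh G (NR G Y K0)" using a b by simp
    also have "\<dots> = K0" using min_sep_eq imp0 unfolding important_def by blast
    finally show ?thesis .
  qed
  have w0: "witness G X Y S K0" using wit_iff K0s by blast
  have eq: "KW G X Y S = K0"
    unfolding KW_def
  proof (rule the_equality)
    show "witness G X Y S K0 \<and> important G X Y K0" using w0 imp0 by blast
    show "\<And>K. witness G X Y S K \<and> important G X Y K \<Longrightarrow> K = K0" using un by blast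
  qed
  show "witness G X Y S (KW G X Y S) \<and> important G X Y (KW G X Y S)" using eq w0 imp0 by simp
  show "\<And>K'. witness G X Y S K' \<Longrightarrow> important G X Y K' \<Longrightarrow> K' = KW G X Y S" using eq un by simp
qed

lemma witness_card:
  assumes "admissible G X Y S" "witness G X Y S K"
  shows "separator G X Y K" "K \<inter> S = {}" "card K = sep_num G X Y + cover_excess G X Y S"
  using assms card_ge unfolding witness_def excess_def by force+

end


locale prj = ngr +
  fixes S K1
  assumes Xne: "X \<noteq> {}"
    and adm: "admissible G X Y S"
    and K1w: "witness G X Y S K1" and K1i: "important G X Y K1"
begin

abbreviation "H \<equiv> Pr G X Y K1"
abbreviation "Z1 \<equiv> NR G Y K1"
abbreviation "W \<equiv> verts G - (NR G Y K1 - X)"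

lemma K1s: "separator G X Y K1" "K1 \<inter> S = {}" "card K1 = sep_num G X Y + cover_excess G X Y S"
  using witness_card[OF adm K1w] by auto

lemma K1eq: "K1 = nbh G Z1" using min_sep_eq K1i unfolding important_def by blast

lemma SN: "S \<subseteq> nbh G X" using adm unfolding admissible_def by blast

lemma SZ: "S \<subseteq> Z1 - X" using adm_NR[OF K1s(1) SN] K1s(2) SN nbh_disj[of X] by blast

lemma vH: "verts H = W" by (simp add: Pr_def Let_def verts_def)
lemma eH: "edges H = edges G \<inter> (W \<times> W) \<union> X \<times> K1 \<union> K1 \<times> X"
  by (simp add: Pr_def Let_def verts_def edges_def)

lemma XW: "X \<subseteq> W" using XV by blast
lemma YW: "Y \<subseteq> W" using YV NR_Y[OF K1s(1)] by blast
lemma K1W: "K1 \<subseteq> W" using sepD[OF K1s(1)] NR_K(1)[of K1] by blast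
lemma XK1: "X \<inter> K1 = {}" using sepD[OF K1s(1)] by blast

lemma wfH: "wf_graph H"
  unfolding wf_graph_def
proof (intro conjI)
  show "finite (verts H)" using vH finV by simp
  show "edges H \<subseteq> verts H \<times> verts H" unfolding eH vH using XW K1W by auto
  show "sym (edges H)" unfolding eH sym_def using symE by blast
  have "irrefl (edges G)" using wf unfolding wf_graph_def by blast
  then show "irrefl (edges H)" unfolding eH irrefl_def using XK1 by blast
qed

lemma grH: "gr H X Y"
  using wfH XW YW XY vH by unfold_locales auto

sublocale H: gr H X Y by (rule grH)

lemma nbhH: "nbh H X = K1"
proof
  show "nbh H X \<subseteq> K1"
  proof
    fix u assume "u \<in> nbh H X"
    then obtain v where v: "v \<in> X" "(v,u) \<in> edges H" "u \<in> verts H" "u \<notin> X"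
      using H.nbh_memD by blast
    show "u \<in> K1"
    proof (rule ccontr)
      assume uK: "u \<notin> K1"
      then have "(v,u) \<in> edges G" using v XK1 unfolding eH by blast
      then have "u \<in> nbh G X" using nbh_mem v by blast
      then have "u \<in> Z1" using nbhX_NR[OF K1s(1)] uK by blast
      then show False using v vH by blast
    qed
  qed
next
  show "K1 \<subseteq> nbh H X"
  proof
    fix k assume k: "k \<in> K1"
    obtain x0 where x0: "x0 \<in> X" using Xne by blast
    have "(x0,k) \<in> edges H" using x0 k unfolding eH by blast
    then show "k \<in> nbh H X" using H.nbh_mem x0 k XK1 by blast
  qed
qed

lemma sepHG:
  assumes sH: "separator H X Y K'"
  shows "separator G X Y K'"
  unfolding separator_def
proof (intro conjI notI)
  show "K' \<subseteq> verts G - (X \<union> Y)" using sH vH unfolding separator_def by auto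
next
  assume "\<exists>x\<in>X. \<exists>y\<in>Y. path_avoid G K' x y"
  then obtain x y where x: "x \<in> X" and y: "y \<in> Y" and p: "path_avoid G K' x y" by blast
  define RH where "RH = {v. \<exists>x\<in>X. path_avoid H K' x v}"
  have K'X: "K' \<inter> X = {}" using H.sepD[OF sH] by blast
  have "y \<in> RH \<union> Z1" using p
  proof (rule pa_closed)
    show "x \<in> RH \<union> Z1" using NR_X[OF K1s(1)] x by blast
  next
    fix u w assume uw: "(u,w) \<in> edges G" "u \<notin> K'" "w \<notin> K'" "w \<in> verts G" "u \<in> RH \<union> Z1"
    show "w \<in> RH \<union> Z1"
    proof (cases "w \<in> Z1")
      case True then show ?thesis by blast
    next
      case wZ: False
      show ?thesis
      proof (cases "u \<in> Z1")
        case True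
        then have wK: "w \<in> K1" using K1eq nbh_mem uw wZ by blast
        obtain x0 where x0: "x0 \<in> X" using Xne by blast
        have "x0 \<in> verts H - K'" using XW vH K'X x0 by blast
        moreover have "(x0,w) \<in> edges H" using eH x0 wK by blast
        ultimately have "path_avoid H K' x0 w" using H.pa_edge uw(3) by blast
        then show ?thesis unfolding RH_def using x0 by blast
      next
        case False
        then have "u \<in> RH" using uw by blast
        then obtain x1 where x1: "x1 \<in> X" "path_avoid H K' x1 u" unfolding RH_def by blast
        have "u \<in> W" using H.pa_end[OF x1(2)] vH by blast
        moreover have "w \<in> W" using uw(4) wZ by blast
        ultimately have "(u,w) \<in> edges H" using uw(1) unfolding eH by blast
        then have "path_avoid H K' x1 w" using H.pa_step x1(2) uw(3) by blast
        then show ?thesis unfolding RH_def using x1 by blast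
      qed
    qed
  qed
  moreover have "y \<notin> Z1" using NR_Y[OF K1s(1)] y by blast
  ultimately have "y \<in> RH" by blast
  then show False using sH y unfolding RH_def separator_def by blast
qed

lemma RHY_X:
  assumes "separator H X Y K'" "y \<in> Y" "path_avoid H K' y v"
  shows "v \<notin> X"
proof
  assume "v \<in> X"
  moreover have "path_avoid H K' v y" using H.pa_sym assms(3) by blast
  ultimately show False using assms(1,2) unfolding separator_def by blast
qed

lemma RHY_K1:
  assumes sH: "separator H X Y K'" and y: "y \<in> Y" and p: "path_avoid H K' y v"
  shows "v \<notin> K1"
proof
  assume vK: "v \<in> K1"
  obtain x0 where x0: "x0 \<in> X" using Xne by blast
  have "(v,x0) \<in> edges H" using eH x0 vK by blast
  moreover have "x0 \<notin> K'" using H.sepD[OF sH] x0 by blast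
  ultimately have "path_avoid H K' y x0" using H.pa_step p by blast
  then show False using RHY_X[OF sH y] x0 by blast
qed

lemma reach_GH:
  assumes sH: "separator H X Y K'" and y: "y \<in> Y" and p: "path_avoid G K' y v"
  shows "path_avoid H K' y v"
proof -
  have K'W: "K' \<subseteq> W" "K' \<inter> Y = {}" using H.sepD[OF sH] vH by auto
  have "v \<in> {v. path_avoid H K' y v}" using p
  proof (rule pa_closed)
    show "y \<in> {v. path_avoid H K' y v}" using H.pa_refl YW vH K'W y by blast
  next
    fix u w assume uw: "(u,w) \<in> edges G" "w \<notin> K'" "w \<in> verts G" "u \<in> {v. path_avoid H K' y v}"
    then have pu: "path_avoid H K' y u" by blast
    have uW: "u \<in> W" using H.pa_end[OF pu] vH by blast
    have uX: "u \<notin> X" using RHY_X[OF sH y pu] .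
    have uK: "u \<notin> K1" using RHY_K1[OF sH y pu] .
    have wW: "w \<in> W"
    proof (rule ccontr)
      assume "w \<notin> W"
      then have "w \<in> Z1" using uw by blast
      moreover have "u \<notin> Z1" using uW uX by blast
      ultimately have "u \<in> nbh G Z1" using nbh_mem symE uw(1) by blast
      then show False using uK K1eq by blast
    qed
    have "(u,w) \<in> edges H" using uw(1) uW wW unfolding eH by blast
    then show "w \<in> {v. path_avoid H K' y v}" using H.pa_step pu uw(2) by blast
  qed
  then show ?thesis by blast
qed

lemma reach_HG:
  assumes sH: "separator H X Y K'" and y: "y \<in> Y" and p: "path_avoid H K' y v"
  shows "path_avoid G K' y v"
proof -
  have K'Y: "K' \<inter> Y = {}" using H.sepD[OF sH] by auto
  have "v \<in> {v. path_avoid G K' y v}" using p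
  proof (rule H.pa_closed)
    show "y \<in> {v. path_avoid G K' y v}" using pa_refl YV K'Y y by blast
  next
    fix u w assume uw: "path_avoid H K' y u" "(u,w) \<in> edges H" "w \<notin> K'"
      "u \<in> {v. path_avoid G K' y v}"
    have uX: "u \<notin> X" using RHY_X[OF sH y uw(1)] .
    have "path_avoid H K' y w" using H.pa_step uw(1-3) by blast
    then have wX: "w \<notin> X" using RHY_X[OF sH y] by blast
    have "(u,w) \<in> edges G" using uw(2) uX wX unfolding eH by blast
    then show "w \<in> {v. path_avoid G K' y v}" using pa_step uw(3,4) by blast
  qed
  then show ?thesis by blast
qed

lemma NR_HG:
  assumes sH: "separator H X Y K'"
  shows "NR G Y K' = NR H Y K' \<union> (Z1 - X)" "NR H Y K' \<inter> (Z1 - X) = {}"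
proof -
  have K'W: "K' \<subseteq> W" using H.sepD[OF sH] vH by auto
  show "NR H Y K' \<inter> (Z1 - X) = {}" using H.NR_K(2) vH by blast
  show "NR G Y K' = NR H Y K' \<union> (Z1 - X)"
  proof
    show "NR G Y K' \<subseteq> NR H Y K' \<union> (Z1 - X)"
    proof
      fix v assume v: "v \<in> NR G Y K'"
      show "v \<in> NR H Y K' \<union> (Z1 - X)"
      proof (cases "v \<in> Z1 - X")
        case False
        then have "v \<in> verts H - K'" using v vH unfolding NR_def by blast
        moreover have "\<not> path_avoid H K' y v" if "y \<in> Y" for y
          using reach_HG[OF sH that] v that unfolding NR_def by blast
        ultimately show ?thesis unfolding NR_def by blast
      qed blast
    qed
  next
    show "NR H Y K' \<union> (Z1 - X) \<subseteq> NR G Y K'"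
    proof
      fix v assume v: "v \<in> NR H Y K' \<union> (Z1 - X)"
      have nr: "\<not> path_avoid G K' y v" if "y \<in> Y" for y
      proof
        assume "path_avoid G K' y v"
        then have pH: "path_avoid H K' y v" by (rule reach_GH[OF sH that])
        then have "v \<in> verts H" using H.pa_end by blast
        then have "v \<notin> Z1 - X" using vH by blast
        then have "v \<in> NR H Y K'" using v by blast
        then show False using pH that unfolding NR_def by blast
      qed
      have "v \<in> verts G - K'" using v K'W vH NR_K(2)[of K1] unfolding NR_def by blast
      then show "v \<in> NR G Y K'" using nr unfolding NR_def by blast
    qed
  qed
qed

lemma sepK1H: "separator H X Y K1"
  using H.sep_from_set[of X] nbhH sepD[OF K1s(1)] XY by auto

lemma disjS: "separator H X Y K' \<Longrightarrow> K' \<inter> S = {}"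
  using H.sepD vH SZ by blast

lemma cardH: "separator H X Y K' \<Longrightarrow> card K1 \<le> card K'"
  using CE_card[OF sepHG disjS] K1s(3) by simp

lemma uniqH:
  assumes sH: "separator H X Y K'" and c: "card K' = card K1"
  shows "K' = K1"
proof -
  have sG: "separator G X Y K'" by (rule sepHG[OF sH])
  have d: "K' \<inter> S = {}" by (rule disjS[OF sH])
  have "NR G Y K' \<subseteq> Z1"
  proof (rule union_lemma[OF K1i sG d SN])
    show "card K' \<le> card K''" if "separator G X Y K''" "K'' \<inter> S = {}" for K''
      using CE_card[OF that] K1s(3) c by simp
    show "S \<subseteq> Z1" using SZ by blast
  qed
  have "K1 \<subseteq> K'"
  proof
    fix k assume k: "k \<in> K1"
    show "k \<in> K'"
    proof (rule ccontr)
      assume kK: "k \<notin> K'"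
      have "k \<in> verts H - K'" using k kK K1W vH by blast
      moreover have "\<not> path_avoid H K' y k" if "y \<in> Y" for y
        using RHY_K1[OF sH that] k by blast
      ultimately have "k \<in> NR H Y K'" unfolding NR_def by blast
      then have "k \<in> Z1" using NR_HG(1)[OF sH] \<open>NR G Y K' \<subseteq> Z1\<close> by blast
      then show False using k NR_K(1)[of K1] by blast
    qed
  qed
  then show ?thesis using card_subset_eq[OF sep_fin[OF sG]] c by metis
qed

lemma sepnumH: "sep_num H X Y = card K1"
  unfolding sep_num_def
proof (rule Least_equality)
  show "\<exists>K. separator H X Y K \<and> card K = card K1" using sepK1H by blast
  show "\<And>n. \<exists>K. separator H X Y K \<and> card K = n \<Longrightarrow> card K1 \<le> n" using cardH by blast
qed

lemma ngrH: "ngr H X Y"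
proof -
  have "normalized H X Y"
    unfolding normalized_def using sepK1H nbhH sepnumH uniqH by simp
  then show ?thesis using grH by (simp add: ngr_def ngr_axioms_def)
qed

lemma impH:
  assumes imp: "important G X Y K" and sub: "Z1 \<subseteq> NR G Y K"
  shows "important H X Y K"
proof -
  have mK: "min_separator G X Y K" using imp unfolding important_def by blast
  have K: "separator G X Y K" using mK unfolding min_separator_def by blast
  have KH: "separator H X Y K"
    unfolding separator_def
  proof (intro conjI notI)
    show "K \<subseteq> verts H - (X \<union> Y)" using sepD[OF K] NR_K(1)[of K] sub vH by blast
  next
    assume "\<exists>x\<in>X. \<exists>y\<in>Y. path_avoid H K x y"
    then obtain x y where x: "x \<in> X" and y: "y \<in> Y" and p: "path_avoid H K x y" by blast
    have "y \<in> NR G Y K" using p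
    proof (rule H.pa_closed)
      show "x \<in> NR G Y K" using NR_X[OF K] x by blast
    next
      fix u w assume uw: "(u,w) \<in> edges H" "w \<notin> K" "w \<in> verts H" "u \<in> NR G Y K"
      have XN: "X \<subseteq> NR G Y K" using NR_X[OF K] .
      have K1N: "K1 \<subseteq> NR G Y K \<union> K" using K1eq nbh_mono[OF sub] nbh_NR[of K] by blast
      show "w \<in> NR G Y K"
      proof (cases "(u,w) \<in> edges G")
        case True
        then show ?thesis using nbh_mem[OF True uw(4)] nbh_NR[of K] uw(2) by blast
      next
        case False
        then have "w \<in> K1 \<or> w \<in> X" using uw(1) unfolding eH by blast
        then show ?thesis using XN K1N uw(2) by blast
      qed
    qed
    then show False using NR_Y[OF K] y by blast
  qed
  show ?thesis
    unfolding important_def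
  proof (intro conjI notI)
    show "min_separator H X Y K"
      unfolding min_separator_def
    proof (intro conjI allI impI notI)
      show "separator H X Y K" by (rule KH)
    next
      fix K' assume "K' \<subset> K" "separator H X Y K'"
      then show False using sepHG mK unfolding min_separator_def by blast
    qed
  next
    assume "\<exists>K'. separator H X Y K' \<and> sep_less H Y K K' \<and> card K' \<le> card K"
    then obtain K' where K': "separator H X Y K'" "NR H Y K \<subseteq> NR H Y K'" "NR H Y K' \<noteq> NR H Y K"
      "card K' \<le> card K" unfolding sep_less_def sep_ge_def by blast
    have a: "NR G Y K \<subseteq> NR G Y K'" using NR_HG(1)[OF KH] NR_HG(1)[OF K'(1)] K'(2) by blast
    have b: "NR G Y K' \<noteq> NR G Y K"
    proof
      assume e: "NR G Y K' = NR G Y K"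
      have "NR H Y K' = NR G Y K' - (Z1 - X)" using NR_HG[OF K'(1)] by blast
      also have "\<dots> = NR G Y K - (Z1 - X)" using e by simp
      also have "\<dots> = NR H Y K" using NR_HG[OF KH] by blast
      finally show False using K'(3) by simp
    qed
    have "sep_less G Y K K'" unfolding sep_less_def sep_ge_def using a b by blast
    then show False using imp sepHG[OF K'(1)] K'(4) unfolding important_def by blast
  qed
qed

end


lemma verts_Pr: "verts (Pr G X Y K) \<subseteq> verts G"
  by (auto simp: Pr_def Let_def verts_def)

lemma cw_verts: "cw G X Y Ss K \<Longrightarrow> A \<in> set Ss \<Longrightarrow> A \<subseteq> verts G"
proof (induction G X Y Ss K arbitrary: A rule: cw.induct)
  case (1 G X Y K) then show ?case by simp
next
  case (2 G X Y S K) then show ?case by (auto simp: admissible_def nbh_def)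
next
  case (3 G X Y S S' Ss K)
  show ?case
  proof (cases "A = S")
    case True then show ?thesis using 3 by (auto simp: admissible_def nbh_def)
  next
    case False
    then have "A \<in> set (S' # Ss)" using 3(3) by simp
    then have "A \<subseteq> verts (Pr G X Y (KW G X Y S))" using 3 by simp
    then show ?thesis using verts_Pr[of G X Y "KW G X Y S"] by blast
  qed
qed

lemma pw_Cons:
  assumes "\<forall>S\<in>set l. a \<inter> S = {}" "\<forall>i<length l. \<forall>j<length l. i \<noteq> j \<longrightarrow> l!i \<inter> l!j = {}"
  shows "\<forall>i<length (a#l). \<forall>j<length (a#l). i \<noteq> j \<longrightarrow> (a#l)!i \<inter> (a#l)!j = {}"
proof (intro allI impI)
  fix i j assume h: "i < length (a#l)" "j < length (a#l)" "i \<noteq> j"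
  show "(a#l)!i \<inter> (a#l)!j = {}"
  proof (cases i)
    case 0
    then obtain j' where "j = Suc j'" using h by (cases j) auto
    then show ?thesis using 0 h assms(1) nth_mem[of j' l] by auto
  next
    case (Suc i')
    show ?thesis
    proof (cases j)
      case 0 then show ?thesis using Suc h assms(1) nth_mem[of i' l] by auto
    next
      case (Suc j') then show ?thesis using \<open>i = Suc i'\<close> h assms(2) by auto
    qed
  qed
qed

lemma ne_iff: "(\<forall>i<length l. l!i \<noteq> {}) \<longleftrightarrow> {} \<notin> set l"
  by (auto simp: in_set_conv_nth)

lemma main:
  assumes "ngr G X Y" "important G X Y K" "K \<noteq> nbh G X"
  shows "\<exists>Ss. compound_witness G X Y Ss K \<and> cw_rank Ss \<le> excess G X Y K \<and> Ss \<noteq> []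
           \<and> hd Ss \<subseteq> nbh G X - K"
  using assms
proof (induction "excess G X Y K" arbitrary: G K rule: less_induct)
  case less
  interpret ngr G X Y by (rule less.prems(1))
  let ?c = "cover_excess G X Y"
  let ?r = "sep_num G X Y"
  have mK: "min_separator G X Y K" using less.prems(2) unfolding important_def by blast
  have sK: "separator G X Y K" using mK unfolding min_separator_def by blast
  define Z where "Z = NR G Y K"
  define S0 where "S0 = nbh G X - K"
  have S0Z: "S0 \<subseteq> Z" unfolding S0_def Z_def using nbhX_NR[OF sK] .
  have S0ne: "S0 \<noteq> {}"
  proof
    assume "S0 = {}"
    then have "nbh G X \<subset> K" using less.prems(3) unfolding S0_def by blast
    then show False using mK sepN unfolding min_separator_def by blast
  qed
  have Xne: "X \<noteq> {}" using S0ne unfolding S0_def nbh_def by blast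
  have S0N: "S0 \<subseteq> nbh G X" unfolding S0_def by blast
  have adm0: "admissible G X Y S0"
    unfolding admissible_def
  proof (intro conjI ballI notI)
    show "S0 \<subseteq> nbh G X" by (rule S0N)
  next
    fix s y assume sy: "s \<in> S0" "y \<in> Y" "(s,y) \<in> edges G"
    have "y \<notin> Z" using NR_Y[OF sK] sy unfolding Z_def by blast
    then have "y \<in> nbh G Z" using nbh_mem sy S0Z by blast
    then have "y \<in> K" using nbh_NR unfolding Z_def by blast
    then show False using sepD[OF sK] sy by blast
  qed
  obtain T where T: "T \<subseteq> S0" "?c T = ?c S0"
    and Tmin: "\<And>T'. T' \<subseteq> S0 \<and> ?c T' = ?c S0 \<Longrightarrow> card T \<le> card T'"
    using ex_has_least_nat[of "\<lambda>T. T \<subseteq> S0 \<and> ?c T = ?c S0" S0 card] by auto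
  have admT: "admissible G X Y T" using adm_sub[OF adm0 T(1)] .
  have c0: "1 \<le> ?c S0" using CE_pos[OF adm0 S0ne] .
  have Tne: "T \<noteq> {}" using T(2) c0 CE_empty by auto
  have finT: "finite T" using T(1) S0N finite_subset[OF _ finV] nbh_V by blast
  have Tdec: "?c (T - {t}) < ?c T" if t: "t \<in> T" for t
  proof -
    have le: "?c (T - {t}) \<le> ?c T" using CE_mono[OF admT] by blast
    have "card (T - {t}) < card T" by (rule card_Diff1_less[OF finT t])
    then have "?c (T - {t}) \<noteq> ?c S0" using Tmin[of "T - {t}"] T(1) by fastforce
    then show ?thesis using le T(2) by simp
  qed
  have cardT: "card T \<le> ?c T"
  proof -
    have "card U \<le> ?c U" if "U \<subseteq> T" for U
    proof -
      have "finite U" using finT that finite_subset by blast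
      then show ?thesis using that
      proof (induction U rule: finite_induct)
        case empty then show ?case by simp
      next
        case (insert a F)
        have a: "a \<in> T" "F \<subseteq> T" using insert.prems by auto
        have adm1: "admissible G X Y (insert a F)" using adm_sub[OF admT insert.prems] .
        have adm2: "admissible G X Y (T - {a})" using adm_sub[OF admT] by blast
        have u: "insert a F \<union> (T - {a}) = T" using a by blast
        have i: "insert a F \<inter> (T - {a}) = F" using a insert.hyps(2) by blast
        have "?c T + ?c F \<le> ?c (insert a F) + ?c (T - {a})"
          using CE_submod[OF adm1 adm2] u i by simp
        moreover have "?c (T - {a}) < ?c T" using Tdec a(1) .
        moreover have "card F \<le> ?c F" using insert.IH a(2) .
        ultimately show ?case using insert.hyps by simp
      qed
    qed
    then show ?thesis by blast
  qed
  have TN: "T \<subseteq> nbh G X" using T(1) S0N by blast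
  have TZ: "T \<subseteq> Z" using T(1) S0Z by blast
  define K1 where "K1 = KW G X Y T"
  have K1wi: "witness G X Y T K1" "important G X Y K1" using KW_spec(1)[OF admT] unfolding K1_def by auto
  have K1s: "separator G X Y K1" "K1 \<inter> T = {}" "card K1 = ?r + ?c T"
    using witness_card[OF admT K1wi(1)] by auto
  have Z1Z: "NR G Y K1 \<subseteq> Z" unfolding Z_def
  proof (rule union_lemma[OF less.prems(2) K1s(1) K1s(2) TN])
    show "card K1 \<le> card K'" if "separator G X Y K'" "K' \<inter> T = {}" for K'
      using CE_card[OF that] K1s(3) by simp
    show "T \<subseteq> NR G Y K" using TZ unfolding Z_def .
  qed
  obtain K2 where K2: "separator G X Y K2" "K2 \<inter> S0 = {}" "card K2 = ?r + ?c S0"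
    using CE_ex[OF adm0] by blast
  have K2T: "K2 \<inter> T = {}" using K2(2) T(1) by blast
  have "NR G Y K2 \<subseteq> NR G Y K1"
  proof (rule union_lemma[OF K1wi(2) K2(1) K2T TN])
    show "card K2 \<le> card K'" if "separator G X Y K'" "K' \<inter> T = {}" for K'
      using CE_card[OF that] K2(3) T(2) by simp
    show "T \<subseteq> NR G Y K1" using adm_NR[OF K1s(1) TN] K1s(2) by blast
  qed
  moreover have "S0 \<subseteq> NR G Y K2" using adm_NR[OF K2(1) S0N] K2(2) by blast
  ultimately have S0Z1: "S0 \<subseteq> NR G Y K1" by blast
  have KT: "K \<inter> T = {}" using T(1) unfolding S0_def by blast
  have cK: "?r + ?c T \<le> card K" using CE_card[OF sK KT] .
  have exc: "excess G X Y K = card K - ?r" unfolding excess_def ..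
  show ?case
  proof (cases "K = K1")
    case True
    have cw1: "cw G X Y [T] K" using norm admT True K1_def by simp
    have "compound_witness G X Y [T] K"
      unfolding compound_witness_def using Tne cw1 by auto
    moreover have "cw_rank [T] \<le> excess G X Y K"
      using cardT K1s(3) True exc by (simp add: cw_rank_def)
    moreover have "hd [T] \<subseteq> nbh G X - K" using T(1) unfolding S0_def by simp
    ultimately show ?thesis by blast
  next
    case False
    have P: "prj G X Y T K1"
      unfolding prj_def prj_axioms_def using less.prems(1) Xne admT K1wi by blast
    interpret P: prj G X Y T K1 by (rule P)
    let ?H = "Pr G X Y K1"
    have ngrH: "ngr ?H X Y" by (rule P.ngrH)
    have impH: "important ?H X Y K" using P.impH[OF less.prems(2)] Z1Z unfolding Z_def by blast
    have neqH: "K \<noteq> nbh ?H X" using P.nbhH False by simp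
    have excH: "excess ?H X Y K = card K - card K1" unfolding excess_def using P.sepnumH by simp
    have cT1: "1 \<le> ?c T" using CE_pos[OF admT Tne] .
    have lt: "excess ?H X Y K < excess G X Y K" using excH exc K1s(3) cK cT1 by linarith
    obtain Ss' where IH: "compound_witness ?H X Y Ss' K" "cw_rank Ss' \<le> excess ?H X Y K"
      "Ss' \<noteq> []" "hd Ss' \<subseteq> nbh ?H X - K"
      using less.hyps[OF lt ngrH impH neqH] by blast
    obtain S' Ss'' where Ss': "Ss' = S' # Ss''" using IH(3) by (cases Ss') auto
    have cwH: "cw ?H X Y Ss' K" using IH(1) unfolding compound_witness_def by blast
    have vS: "A \<subseteq> verts G - (NR G Y K1 - X)" if "A \<in> set Ss'" for A
      using cw_verts[OF cwH that] P.vH by simp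
    have TZ1: "T \<subseteq> NR G Y K1 - X" using P.SZ .
    have S'h: "S' \<subseteq> K1 - K" using IH(4) Ss' P.nbhH by simp
    have nK1: "nbh G X \<inter> K1 \<subseteq> K" using S0Z1 NR_K(1)[of K1] unfolding S0_def by blast
    have nW: "nbh G X \<inter> (verts G - (NR G Y K1 - X)) \<subseteq> K1"
      using nbhX_NR[OF K1s(1)] nbh_disj[of X] by blast
    have tl: "\<Union> (set Ss'') \<inter> K1 = {}"
    proof (cases Ss'')
      case Nil then show ?thesis by simp
    next
      case (Cons a l)
      then show ?thesis using cwH Ss' P.nbhH by simp
    qed
    have disjN: "\<Union> (set (S' # Ss'')) \<inter> nbh G X = {}"
    proof -
      have "S' \<inter> nbh G X = {}" using S'h nK1 by blast
      moreover have "A \<inter> nbh G X = {}" if "A \<in> set Ss''" for A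
      proof -
        have "A \<subseteq> verts G - (NR G Y K1 - X)" using vS Ss' that by simp
        moreover have "A \<inter> K1 = {}" using tl that by blast
        ultimately show ?thesis using nW by blast
      qed
      ultimately show ?thesis by auto
    qed
    have cwG: "cw G X Y (T # S' # Ss'') K"
      using norm admT disjN cwH Ss' K1_def by simp
    have pw': "\<forall>i<length Ss'. \<forall>j<length Ss'. i \<noteq> j \<longrightarrow> Ss'!i \<inter> Ss'!j = {}"
      using IH(1) unfolding compound_witness_def by blast
    have ne': "{} \<notin> set Ss'" using IH(1) ne_iff unfolding compound_witness_def by blast
    have dT: "\<forall>A\<in>set Ss'. T \<inter> A = {}" using vS TZ1 by blast
    have "compound_witness G X Y (T # Ss') K"
      unfolding compound_witness_def
    proof (intro conjI)
      have "{} \<notin> set (T # Ss')" using ne' Tne by simp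
      then show "\<forall>i<length (T # Ss'). (T # Ss') ! i \<noteq> {}" using ne_iff[of "T # Ss'"] by blast
      show "\<forall>i<length (T # Ss'). \<forall>j<length (T # Ss'). i \<noteq> j \<longrightarrow> (T # Ss') ! i \<inter> (T # Ss') ! j = {}"
        by (rule pw_Cons[OF dT pw'])
      show "cw G X Y (T # Ss') K" using cwG Ss' by simp
    qed
    moreover have "cw_rank (T # Ss') \<le> excess G X Y K"
    proof -
      have "cw_rank (T # Ss') = card T + cw_rank Ss'" by (simp add: cw_rank_def)
      then show ?thesis using IH(2) excH exc cardT K1s(3) cK by linarith
    qed
    moreover have "hd (T # Ss') \<subseteq> nbh G X - K" using T(1) unfolding S0_def by simp
    ultimately show ?thesis by blast
  qed
qed

theorem theorem2:
  fixes G :: "'a graph" and X Y K :: "'a set"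
  assumes "wf_graph G"
    and "X \<subseteq> verts G" and "Y \<subseteq> verts G" and "X \<inter> Y = {}"
    and "normalized G X Y"
    and "important G X Y K"
    and "K \<noteq> nbh G X"
  shows "\<exists>Ss. compound_witness G X Y Ss K \<and> cw_rank Ss \<le> excess G X Y K"
proof -
  have "ngr G X Y" using assms by (simp add: ngr_def ngr_axioms_def gr_def)
  then show ?thesis using main assms(6,7) by blast
qed


end
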